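(* Let $f$ be as in the standing setting and satisfy quadratic functional growth with constant $\kappa_f>0$: $f(x)-f^*\ge\frac{\kappa_f}{2}\|x-[x]_{X^*}\|^2$ for all $x\in X$. Let $\beta\ge0$, $L>0$, $\bar L_f>0$, and let $\{x^k\}\subseteq X$ be generated by a feasible descent method: for $k\ge0$, $$x^{k+1}=\big[x^k-\alpha_k\nabla f(x^k)+e^k\big]_X$$ with step sizes $\alpha_k\ge\bar L_f^{-1}$ and perturbations $e^k$ satisfying $\|e^k\|\le\beta\|x^{k+1}-x^k\|$ and $f(x^{k+1})\le f(x^k)-\frac{L}{2}\|x^{k+1}-x^k\|^2$. Then $$f(x^k)-f^*\le\left(\frac{1}{1+\frac{L\kappa_f}{4(L_f+\bar L_f+\beta\bar L_f)^2}}\right)^k\big(f(x^0)-f^*\big)\qquad\forall k\ge0.$$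
   Context: Standing setting: $X\subseteq\mathbb{R}^n$ is a nonempty closed convex set; $f:X\to\mathbb{R}$ is convex and continuously differentiable, with $L_f$-Lipschitz continuous gradient on $X$ ($L_f>0$). Consider $f^*=\min_{x\in X}f(x)$ with optimal set $X^*$ nonempty and closed and $f^*$ finite. $\|\cdot\|$ is the Euclidean norm and $[u]_S$ is the Euclidean projection onto a closed convex set $S$. *)

theory Defs
  imports "HOL-Analysis.Analysis"
begin

end

theory Submission imports Defs begin
lemma grad_ineq:
  fixes f :: "'a::euclidean_space \<Rightarrow> real"
  assumes cX: "convex X" and cf: "convex_on X f" and xX: "x \<in> X" and yX: "y \<in> X"
    and d: "(f has_derivative (\<lambda>h. g \<bullet> h)) (at x within X)"
  shows "f x + g \<bullet> (y - x) \<le> f y"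
proof -
  define p where "p = (\<lambda>t::real. x + t *\<^sub>R (y - x))"
  have img: "p ` {0..1} \<subseteq> X"
  proof
    fix z assume "z \<in> p ` {0..1}"
    then obtain t where t: "t \<in> {0..1}" "z = p t" by auto
    have "z = (1 - t) *\<^sub>R x + t *\<^sub>R y" using t by (simp add: p_def algebra_simps)
    thus "z \<in> X" using t cX xX yX by (auto intro: convexD_alt)
  qed
  have pd: "(p has_derivative (\<lambda>t. t *\<^sub>R (y - x))) (at 0 within {0..1})"
    unfolding p_def by (auto intro!: derivative_eq_intros)
  have p0: "p 0 = x" by (simp add: p_def)
  have d2: "(f has_derivative (\<lambda>h. g \<bullet> h)) (at (p 0) within p ` {0..1})"
    using has_derivative_subset[OF d img] p0 by simp
  have "((\<lambda>t. f (p t)) has_derivative (\<lambda>t. g \<bullet> (t *\<^sub>R (y - x)))) (at 0 within {0..1})"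
    by (rule has_derivative_in_compose[OF pd d2])
  moreover have "(\<lambda>t. g \<bullet> (t *\<^sub>R (y - x))) = (*) (g \<bullet> (y - x))"
    by (auto simp: inner_scaleR_right)
  ultimately have "((\<lambda>t. f (p t)) has_field_derivative (g \<bullet> (y - x))) (at 0 within {0..1})"
    by (simp add: has_field_derivative_def)
  hence lim: "((\<lambda>t. (f (p t) - f (p 0)) / (t - 0)) \<longlongrightarrow> g \<bullet> (y - x)) (at 0 within {0..1})"
    by (simp add: has_field_derivative_iff)
  have ev: "eventually (\<lambda>t. (f (p t) - f (p 0)) / (t - 0) \<le> f y - f x) (at 0 within {0..1})"
    unfolding eventually_at_filter
  proof (intro always_eventually allI impI)
    fix t :: real assume t: "t \<noteq> 0" "t \<in> {0..1}"
    have "p t = (1 - t) *\<^sub>R x + t *\<^sub>R y" by (simp add: p_def algebra_simps)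
    hence "f (p t) \<le> (1 - t) * f x + t * f y" using convex_onD[OF cf, of t x y] t xX yX by auto
    hence "f (p t) - f x \<le> t * (f y - f x)" by (simp add: algebra_simps)
    thus "(f (p t) - f (p 0)) / (t - 0) \<le> f y - f x" using t p0 by (simp add: divide_simps mult.commute)
  qed
  have nb: "at (0::real) within {0..1} \<noteq> bot"
  proof -
    have "{0..1::real} - {0} = {0<..1}" by auto
    thus ?thesis by (simp add: at_within_eq_bot_iff)
  qed
  have "g \<bullet> (y - x) \<le> f y - f x"
    by (rule tendsto_le[OF nb tendsto_const lim ev])
  thus ?thesis by simp
qed
theorem theorem15:
  fixes X :: "'a::euclidean_space set"
    and f :: "'a \<Rightarrow> real" and gradf :: "'a \<Rightarrow> 'a"
    and Lf kappa beta L Lbar fstar :: real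
    and x e :: "nat \<Rightarrow> 'a" and alpha :: "nat \<Rightarrow> real"
  assumes X_ne: "X \<noteq> {}" and X_closed: "closed X" and X_convex: "convex X"
    and f_convex: "convex_on X f"
    and f_grad: "\<And>y. y \<in> X \<Longrightarrow> (f has_derivative (\<lambda>h. gradf y \<bullet> h)) (at y within X)"
    and grad_cont: "continuous_on X gradf"
    and Lf_pos: "Lf > 0"
    and grad_lip: "\<And>y z. y \<in> X \<Longrightarrow> z \<in> X \<Longrightarrow> norm (gradf y - gradf z) \<le> Lf * norm (y - z)"
    and fstar_def: "fstar = (INF y\<in>X. f y)"
    and Xstar_ne: "{y \<in> X. f y = fstar} \<noteq> {}"
    and Xstar_closed: "closed {y \<in> X. f y = fstar}"
    and kappa_pos: "kappa > 0"
    and qfg: "\<And>y. y \<in> X \<Longrightarrow>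
        f y - fstar \<ge> kappa / 2 * (norm (y - closest_point {z \<in> X. f z = fstar} y))\<^sup>2"
    and beta_nn: "beta \<ge> 0" and L_pos: "L > 0" and Lbar_pos: "Lbar > 0"
    and x_in: "\<And>k. x k \<in> X"
    and iter: "\<And>k. x (Suc k) = closest_point X (x k - alpha k *\<^sub>R gradf (x k) + e k)"
    and step: "\<And>k. alpha k \<ge> 1 / Lbar"
    and err: "\<And>k. norm (e k) \<le> beta * norm (x (Suc k) - x k)"
    and descent: "\<And>k. f (x (Suc k)) \<le> f (x k) - L / 2 * (norm (x (Suc k) - x k))\<^sup>2"
  shows "\<And>k. f (x k) - fstar \<le>
     (1 / (1 + L * kappa / (4 * (Lf + Lbar + beta * Lbar)\<^sup>2))) ^ k * (f (x 0) - fstar)"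
proof -
  define C where "C = Lf + Lbar + beta * Lbar"
  have Cpos: "C > 0" using Lf_pos Lbar_pos beta_nn by (simp add: C_def add_pos_nonneg)
  define r where "r = 1 / (1 + L * kappa / (4 * C\<^sup>2))"
  have rnn: "r \<ge> 0" using L_pos kappa_pos Cpos by (simp add: r_def)
  define S where "S = {z \<in> X. f z = fstar}"
  have stepk: "f (x (Suc k)) - fstar \<le> r * (f (x k) - fstar)" for k
  proof -
    define xp where "xp = x (Suc k)"
    define xk where "xk = x k"
    define xb where "xb = closest_point S xp"
    define a where "a = alpha k"
    define g where "g = gradf xk"
    define dd where "dd = norm (xp - xk)"
    define rr where "rr = norm (xp - xb)"
    define Dp where "Dp = f xp - fstar"
    define D where "D = f xk - fstar"
    have xbS: "xb \<in> S" unfolding xb_def S_def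
      using closest_point_in_set[OF Xstar_closed Xstar_ne] by blast
    hence xbX: "xb \<in> X" and fxb: "f xb = fstar" by (auto simp: S_def)
    have xpX: "xp \<in> X" and xkX: "xk \<in> X" using x_in by (auto simp: xp_def xk_def)
    have apos: "a > 0" using step[of k] Lbar_pos unfolding a_def
      by (meson less_le_trans zero_less_divide_1_iff)
    have ainv: "1 / a \<le> Lbar" using step[of k] Lbar_pos apos unfolding a_def
      by (simp add: divide_simps mult.commute)
    have proj: "(xk - a *\<^sub>R g + e k - xp) \<bullet> (xb - xp) \<le> 0"
      using closest_point_dot[OF X_convex X_closed xbX, of "xk - a *\<^sub>R g + e k"]
      iter[of k] unfolding xp_def xk_def a_def g_def by simp
    have A: "a * (g \<bullet> (xp - xb)) \<le> (xk - xp + e k) \<bullet> (xp - xb)"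
      using proj by (simp add: inner_diff_left inner_diff_right inner_add_left algebra_simps)
    have "(xk - xp + e k) \<bullet> (xp - xb) \<le> norm (xk - xp + e k) * rr"
      unfolding rr_def by (rule norm_cauchy_schwarz)
    also have "norm (xk - xp + e k) \<le> dd + beta * dd"
    proof -
      have "norm (xk - xp + e k) \<le> norm (xk - xp) + norm (e k)" by (rule norm_triangle_ineq)
      moreover have "norm (xk - xp) = dd" by (simp add: dd_def norm_minus_commute)
      moreover have "norm (e k) \<le> beta * dd" using err[of k] by (simp add: dd_def xp_def xk_def)
      ultimately show ?thesis by linarith
    qed
    hence "norm (xk - xp + e k) * rr \<le> (dd + beta * dd) * rr"
      by (rule mult_right_mono) (simp add: rr_def)
    finally have B: "a * (g \<bullet> (xp - xb)) \<le> (1 + beta) * dd * rr" using A by (simp add: algebra_simps)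
    have nn: "(1 + beta) * dd * rr \<ge> 0" using beta_nn by (simp add: dd_def rr_def)
    have "g \<bullet> (xp - xb) \<le> (1 / a) * ((1 + beta) * dd * rr)"
      using B apos by (simp add: divide_simps mult.commute)
    also have "\<dots> \<le> Lbar * ((1 + beta) * dd * rr)" by (rule mult_right_mono[OF ainv nn])
    finally have G1: "g \<bullet> (xp - xb) \<le> Lbar * (1 + beta) * dd * rr" by simp
    have "(gradf xp - g) \<bullet> (xp - xb) \<le> norm (gradf xp - g) * rr"
      unfolding rr_def by (rule norm_cauchy_schwarz)
    also have "\<dots> \<le> Lf * dd * rr"
      using grad_lip[OF xpX xkX] by (auto simp: g_def dd_def rr_def intro: mult_right_mono)
    finally have G2: "(gradf xp - g) \<bullet> (xp - xb) \<le> Lf * dd * rr" .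
    have cvx: "f xp + gradf xp \<bullet> (xb - xp) \<le> f xb"
      by (rule grad_ineq[OF X_convex f_convex xpX xbX f_grad[OF xpX]])
    have "gradf xp \<bullet> (xp - xb) = (gradf xp - g) \<bullet> (xp - xb) + g \<bullet> (xp - xb)"
      by (simp add: inner_diff_left)
    hence "Dp \<le> (gradf xp - g) \<bullet> (xp - xb) + g \<bullet> (xp - xb)"
      using cvx fxb unfolding Dp_def by (simp add: inner_diff_right inner_diff_left)
    hence E1: "Dp \<le> C * dd * rr" using G1 G2 unfolding C_def by (simp add: algebra_simps)
    have Q: "kappa / 2 * rr\<^sup>2 \<le> Dp"
      using qfg[OF xpX] unfolding Dp_def rr_def xb_def S_def by simp
    have "kappa / 2 * rr\<^sup>2 \<ge> 0" using kappa_pos by simp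
    hence Dpnn: "Dp \<ge> 0" using Q by linarith
    have De: "L / 2 * dd\<^sup>2 \<le> D - Dp"
      using descent[of k] unfolding D_def Dp_def dd_def xp_def xk_def by simp
    have key: "L * kappa * Dp \<le> 4 * C\<^sup>2 * (D - Dp)"
    proof (cases "Dp = 0")
      case True
      have "L / 2 * dd\<^sup>2 \<ge> 0" using L_pos by simp
      hence "D - Dp \<ge> 0" using De by linarith
      thus ?thesis using True by simp
    next
      case False
      hence Dppos: "Dp > 0" using Dpnn by simp
      have "Dp\<^sup>2 \<le> (C * dd * rr)\<^sup>2" using E1 Dpnn by (rule power_mono)
      also have "\<dots> = C\<^sup>2 * dd\<^sup>2 * rr\<^sup>2" by (simp add: power_mult_distrib)
      also have "\<dots> \<le> C\<^sup>2 * dd\<^sup>2 * (2 / kappa * Dp)"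
      proof (rule mult_left_mono)
        show "rr\<^sup>2 \<le> 2 / kappa * Dp" using Q kappa_pos by (simp add: field_simps)
      qed simp
      finally have "Dp * Dp \<le> (2 * C\<^sup>2 * dd\<^sup>2 / kappa) * Dp"
        by (simp add: power2_eq_square algebra_simps)
      hence "Dp \<le> 2 * C\<^sup>2 * dd\<^sup>2 / kappa" using Dppos by (rule mult_right_le_imp_le)
      hence "kappa * Dp \<le> 2 * C\<^sup>2 * dd\<^sup>2" using kappa_pos by (simp add: field_simps)
      hence "L * (kappa * Dp) \<le> L * (2 * C\<^sup>2 * dd\<^sup>2)" using L_pos by simp
      also have "\<dots> = 4 * C\<^sup>2 * (L / 2 * dd\<^sup>2)" by simp
      also have "\<dots> \<le> 4 * C\<^sup>2 * (D - Dp)" using De by (rule mult_left_mono) simp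
      finally show ?thesis by simp
    qed
    have "Dp \<le> r * D"
    proof -
      have pos: "4 * C\<^sup>2 + L * kappa > 0" using Cpos L_pos kappa_pos by (simp add: add_pos_pos)
      have req: "r = 4 * C\<^sup>2 / (4 * C\<^sup>2 + L * kappa)" using Cpos unfolding r_def
        by (simp add: field_simps)
      have "Dp * (4 * C\<^sup>2 + L * kappa) \<le> 4 * C\<^sup>2 * D" using key by (simp add: algebra_simps)
      thus ?thesis unfolding req using pos by (simp add: field_simps)
    qed
    thus ?thesis unfolding Dp_def D_def xp_def xk_def .
  qed
  fix k
  have "f (x k) - fstar \<le> r ^ k * (f (x 0) - fstar)"
  proof (induction k)
    case 0 thus ?case by simp
  next
    case (Suc k)
    have "f (x (Suc k)) - fstar \<le> r * (f (x k) - fstar)" by (rule stepk)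
    also have "\<dots> \<le> r * (r ^ k * (f (x 0) - fstar))" using Suc.IH rnn by (rule mult_left_mono)
    finally show ?case by simp
  qed
  thus "f (x k) - fstar \<le>
     (1 / (1 + L * kappa / (4 * (Lf + Lbar + beta * Lbar)\<^sup>2))) ^ k * (f (x 0) - fstar)"
    by (simp add: r_def C_def)
qed

end
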